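(* Assume the setting in the context. Let $x_i,x_j,x_k\in X$ be distinct, and suppose $(x_i,x_j)$ is an invisible pair, i.e., for all $M\subseteq X\setminus\{x_i\}$, $N\subseteq X\setminus\{x_j\}$ and $G_1,G_2\in\mathcal G$, $x_i-G_1(M)\not\perp\!\!\!\perp x_j-G_2(N)$. If $x_k$ is an ancestor of $x_i$ and $x_k\perp\!\!\!\perp x_j\mid x_i$, then $x_i$ is an ancestor of $x_j$.
   Context: Model: $X$ is a finite set of observed random variables and $U$ a finite set of unobserved random variables; $V=X\cup U$ and $G=(V,E)$ is a DAG on $V$. Each $v_i\in V$ satisfies $v_i=\sum_{x_j\in \mathrm{pa}(v_i)\cap X} f^{(i)}_j(x_j)+\sum_{u_k\in\mathrm{pa}(v_i)\cap U} f^{(i)}_k(u_k)+n_i$, where the $f$'s are nonlinear functions and the external noises $n_i$ are jointly independent. "Parent", "ancestor", "path", "d-separation" refer to $G$ (a path has distinct vertices). Causal Faithfulness Condition (CFC): any conditional independence among variables of $V$ that is not entailed by d-separation in $G$ does not hold. $\perp\!\!\!\perp$ denotes statistical independence, $\not\perp\!\!\!\perp$ dependence. Function class: $\mathcal G$ is a class of generalized additive functions: for $G\in\mathcal G$ and a set $M$ of observed variables, $G(M)=\sum_{x_m\in M} g_m(x_m)$ (with $G(\emptyset)=0$). It satisfies: for any $x_i,x_j\in X$, sets $M,N\subseteq X$, $G_1,G_2\in\mathcal G$ and external noise $n_k$, if $n_k\not\perp\!\!\!\perp x_i-G_1(M)$ and $n_k\not\perp\!\!\!\perp x_j-G_2(N)$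 then $x_i-G_1(M)\not\perp\!\!\!\perp x_j-G_2(N)$. Definitions, for $X'\subseteq X$ and $x_i,x_j\in X'$: an unobserved causal path (UCP) from $x_i$ to $x_j$ w.r.t. $X'$ is a directed path $x_i\to\cdots\to v_k\to x_j$ in $G$ with $v_k\notin X'$; an unobserved backdoor path (UBP) between $x_i$ and $x_j$ w.r.t. $X'$ is a path $x_i\leftarrow v_k\leftarrow\cdots\leftarrow v\to\cdots\to v_l\to x_j$ with $v_k,v_l\notin X'$ (allowing $v=v_k$, $v=v_l$, or $v=v_k=v_l$; $v$ may be in $X'$). "UBP/UCP between $x_i$ and $x_j$" means a UBP or a UCP in either direction. $(x_i,x_j)$ is invisible w.r.t. $X'$ if there is a UBP/UCP between them w.r.t. $X'$. When $X'$ is omitted, $X'=X$. Standing fact (taken as known), for $X'\subseteq X$ and distinct $x_i,x_j\in X'$: (F3) $(x_i,x_j)$ is invisible w.r.t. $X'$ iff for all $M\subseteq X'\setminus\{x_i\}$, $N\subseteq X'\setminus\{x_j\}$, $G_1,G_2\in\mathcal G$: $x_i-G_1(M)\not\perp\!\!\!\perp x_j-G_2(N)$. *)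

theory Defs
  imports "HOL-Probability.Probability"
begin

definition adjacent :: "('v \<times> 'v) set \<Rightarrow> 'v \<Rightarrow> 'v \<Rightarrow> bool" where
  "adjacent E a b \<longleftrightarrow> (a, b) \<in> E \<or> (b, a) \<in> E"

definition is_path :: "('v \<times> 'v) set \<Rightarrow> 'v list \<Rightarrow> bool" where
  "is_path E ps \<longleftrightarrow> ps \<noteq> [] \<and> distinct ps \<and>
     (\<forall>i. Suc i < length ps \<longrightarrow> adjacent E (ps ! i) (ps ! Suc i))"

definition is_dpath :: "('v \<times> 'v) set \<Rightarrow> 'v list \<Rightarrow> bool" where
  "is_dpath E ps \<longleftrightarrow> ps \<noteq> [] \<and> distinct ps \<and>
     (\<forall>i. Suc i < length ps \<longrightarrow> (ps ! i, ps ! Suc i) \<in> E)"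

definition ancestor :: "('v \<times> 'v) set \<Rightarrow> 'v \<Rightarrow> 'v \<Rightarrow> bool" where
  "ancestor E a b \<longleftrightarrow> (a, b) \<in> E\<^sup>+"

definition collider_at :: "('v \<times> 'v) set \<Rightarrow> 'v list \<Rightarrow> nat \<Rightarrow> bool" where
  "collider_at E ps i \<longleftrightarrow> (ps ! (i - 1), ps ! i) \<in> E \<and> (ps ! Suc i, ps ! i) \<in> E"

definition blocked :: "('v \<times> 'v) set \<Rightarrow> 'v set \<Rightarrow> 'v list \<Rightarrow> bool" where
  "blocked E Z ps \<longleftrightarrow> (\<exists>i. 0 < i \<and> Suc i < length ps \<and>
      ((\<not> collider_at E ps i \<and> ps ! i \<in> Z) \<or>
       (collider_at E ps i \<and> {d. (ps ! i, d) \<in> E\<^sup>*} \<inter> Z = {})))"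

definition d_separated :: "('v \<times> 'v) set \<Rightarrow> 'v set \<Rightarrow> 'v set \<Rightarrow> 'v set \<Rightarrow> bool" where
  "d_separated E A B Z \<longleftrightarrow>
     (\<forall>ps. is_path E ps \<and> hd ps \<in> A \<and> last ps \<in> B \<longrightarrow> blocked E Z ps)"

text \<open>Unobserved causal path from a to b w.r.t. X': a -> ... -> v_k -> b with v_k not in X'.\<close>
definition UCP :: "('v \<times> 'v) set \<Rightarrow> 'v set \<Rightarrow> 'v \<Rightarrow> 'v \<Rightarrow> bool" where
  "UCP E X' a b \<longleftrightarrow> (\<exists>ps. is_dpath E ps \<and> length ps \<ge> 2 \<and> hd ps = a \<and> last ps = b \<and>
      ps ! (length ps - 2) \<notin> X')"

text \<open>Unobserved backdoor path between a and b w.r.t. X':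
  a <- v_k <- ... <- v -> ... -> v_l -> b with v_k, v_l not in X'; the two directed
  branches from v share only v, so that the whole is a path with distinct vertices.\<close>
definition UBP :: "('v \<times> 'v) set \<Rightarrow> 'v set \<Rightarrow> 'v \<Rightarrow> 'v \<Rightarrow> bool" where
  "UBP E X' a b \<longleftrightarrow> (\<exists>p q. is_dpath E p \<and> is_dpath E q \<and> length p \<ge> 2 \<and> length q \<ge> 2 \<and>
      hd p = hd q \<and> last p = a \<and> last q = b \<and> set p \<inter> set q = {hd p} \<and>
      p ! (length p - 2) \<notin> X' \<and> q ! (length q - 2) \<notin> X')"

definition invisible :: "('v \<times> 'v) set \<Rightarrow> 'v set \<Rightarrow> 'v \<Rightarrow> 'v \<Rightarrow> bool" where
  "invisible E X' a b \<longleftrightarrow> UBP E X' a b \<or> UCP E X' a b \<or> UCP E X' b a"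

definition gen_sigma :: "'a measure \<Rightarrow> ('v \<Rightarrow> 'a \<Rightarrow> real) \<Rightarrow> 'v set \<Rightarrow> 'a measure" where
  "gen_sigma M Y C = sigma (space M) {Y c -` B \<inter> space M | c B. c \<in> C \<and> B \<in> sets borel}"

definition cond_indep :: "'a measure \<Rightarrow> ('v \<Rightarrow> 'a \<Rightarrow> real) \<Rightarrow> 'v set \<Rightarrow> 'v set \<Rightarrow> 'v set \<Rightarrow> bool" where
  "cond_indep M Y A B C \<longleftrightarrow>
     (\<forall>S \<in> sets (gen_sigma M Y A). \<forall>T \<in> sets (gen_sigma M Y B).
        AE \<omega> in M. real_cond_exp M (gen_sigma M Y C) (indicator (S \<inter> T)) \<omega> =
           real_cond_exp M (gen_sigma M Y C) (indicator S) \<omega> *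
           real_cond_exp M (gen_sigma M Y C) (indicator T) \<omega>)"

definition GAM :: "('v \<Rightarrow> real \<Rightarrow> real) \<Rightarrow> ('v \<Rightarrow> 'a \<Rightarrow> real) \<Rightarrow> 'v set \<Rightarrow> 'a \<Rightarrow> real" where
  "GAM g Y Ms \<omega> = (\<Sum>m\<in>Ms. g m (Y m \<omega>))"

definition nonlinear :: "(real \<Rightarrow> real) \<Rightarrow> bool" where
  "nonlinear f \<longleftrightarrow> \<not> (\<exists>a b. \<forall>x. f x = a * x + b)"

definition SEM :: "'a measure \<Rightarrow> ('v::finite \<times> 'v) set \<Rightarrow> ('v \<Rightarrow> 'v \<Rightarrow> real \<Rightarrow> real)
     \<Rightarrow> ('v \<Rightarrow> 'a \<Rightarrow> real) \<Rightarrow> ('v \<Rightarrow> 'a \<Rightarrow> real) \<Rightarrow> bool" where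
  "SEM M E f n Y \<longleftrightarrow> prob_space M \<and> acyclic E \<and>
     (\<forall>v. n v \<in> borel_measurable M \<and> Y v \<in> borel_measurable M) \<and>
     prob_space.indep_vars M (\<lambda>_. borel) n UNIV \<and>
     (\<forall>v p. (p, v) \<in> E \<longrightarrow> f v p \<in> borel_measurable borel \<and> nonlinear (f v p)) \<and>
     (\<forall>v. \<forall>\<omega>\<in>space M. Y v \<omega> = (\<Sum>p\<in>{p. (p, v) \<in> E}. f v p (Y p \<omega>)) + n v \<omega>)"

definition CFC :: "'a measure \<Rightarrow> ('v \<times> 'v) set \<Rightarrow> ('v \<Rightarrow> 'a \<Rightarrow> real) \<Rightarrow> bool" where
  "CFC M E Y \<longleftrightarrow> (\<forall>A B C. A \<inter> B = {} \<and> A \<inter> C = {} \<and> B \<inter> C = {} \<longrightarrow>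
       cond_indep M Y A B C \<longrightarrow> d_separated E A B C)"

definition resid :: "('v \<Rightarrow> 'a \<Rightarrow> real) \<Rightarrow> 'v \<Rightarrow> ('v \<Rightarrow> real \<Rightarrow> real) \<Rightarrow> 'v set \<Rightarrow> 'a \<Rightarrow> real" where
  "resid Y x g Ms = (\<lambda>\<omega>. Y x \<omega> - GAM g Y Ms \<omega>)"

definition class_property :: "'a measure \<Rightarrow> 'v set \<Rightarrow> ('v \<Rightarrow> 'a \<Rightarrow> real) \<Rightarrow> ('v \<Rightarrow> 'a \<Rightarrow> real)
     \<Rightarrow> ('v \<Rightarrow> real \<Rightarrow> real) set \<Rightarrow> bool" where
  "class_property M X n Y GG \<longleftrightarrow>
     (\<forall>xi\<in>X. \<forall>xj\<in>X. \<forall>Ms Ns. \<forall>g1\<in>GG. \<forall>g2\<in>GG. \<forall>k. Ms \<subseteq> X \<and> Ns \<subseteq> X \<longrightarrow>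
        \<not> prob_space.indep_var M borel (n k) borel (resid Y xi g1 Ms) \<longrightarrow>
        \<not> prob_space.indep_var M borel (n k) borel (resid Y xj g2 Ns) \<longrightarrow>
        \<not> prob_space.indep_var M borel (resid Y xi g1 Ms) borel (resid Y xj g2 Ns))"

text \<open>Standing fact (F3), taken as known.\<close>
definition fact_F3 :: "'a measure \<Rightarrow> ('v \<times> 'v) set \<Rightarrow> 'v set \<Rightarrow> ('v \<Rightarrow> 'a \<Rightarrow> real)
     \<Rightarrow> ('v \<Rightarrow> real \<Rightarrow> real) set \<Rightarrow> bool" where
  "fact_F3 M E X Y GG \<longleftrightarrow>
     (\<forall>X' \<subseteq> X. \<forall>xi\<in>X'. \<forall>xj\<in>X'. xi \<noteq> xj \<longrightarrow>
        (invisible E X' xi xj \<longleftrightarrow>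
          (\<forall>Ms Ns. \<forall>g1\<in>GG. \<forall>g2\<in>GG. Ms \<subseteq> X' - {xi} \<and> Ns \<subseteq> X' - {xj} \<longrightarrow>
             \<not> prob_space.indep_var M borel (resid Y xi g1 Ms) borel (resid Y xj g2 Ns))))"

end

theory Submission
  imports Defs
begin


lemma no2cycle: "acyclic E \<Longrightarrow> (a,b)\<in>E \<Longrightarrow> (b,a)\<in>E \<Longrightarrow> False"
  by (meson acyclic_def r_into_trancl trancl_trans)

lemma dpath_rtrancl: "is_dpath E ps \<Longrightarrow> i \<le> j \<Longrightarrow> j < length ps \<Longrightarrow> (ps!i, ps!j) \<in> E\<^sup>*"
proof (induction j)
  case 0 then show ?case by simp
next
  case (Suc j)
  show ?case
  proof (cases "i = Suc j")
    case True then show ?thesis by simp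
  next
    case False
    then have "(ps!i, ps!j) \<in> E\<^sup>*" using Suc by simp
    moreover have "(ps!j, ps!Suc j) \<in> E" using Suc.prems unfolding is_dpath_def by blast
    ultimately show ?thesis by simp
  qed
qed

lemma dpath_trancl: "is_dpath E ps \<Longrightarrow> i < j \<Longrightarrow> j < length ps \<Longrightarrow> (ps!i, ps!j) \<in> E\<^sup>+"
proof -
  assume a: "is_dpath E ps" "i < j" "j < length ps"
  obtain j' where j: "j = Suc j'" using a(2) by (cases j) auto
  have "(ps!i, ps!j') \<in> E\<^sup>*" using dpath_rtrancl[OF a(1)] a j by simp
  moreover have "(ps!j', ps!j) \<in> E" using a j unfolding is_dpath_def by blast
  ultimately show ?thesis by simp
qed

lemma is_dpath_snoc:
  assumes "is_dpath E ps" "(last ps, z) \<in> E" "z \<notin> set ps"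
  shows "is_dpath E (ps @ [z])"
  unfolding is_dpath_def
proof (intro conjI allI impI)
  show "ps @ [z] \<noteq> []" by simp
  show "distinct (ps @ [z])" using assms unfolding is_dpath_def by simp
  fix i assume i: "Suc i < length (ps @ [z])"
  show "((ps @ [z]) ! i, (ps @ [z]) ! Suc i) \<in> E"
  proof (cases "Suc i < length ps")
    case True then show ?thesis using assms(1) unfolding is_dpath_def by (simp add: nth_append)
  next
    case False
    then have "i = length ps - 1" "ps \<noteq> []" using i assms(1) unfolding is_dpath_def by auto
    then show ?thesis using assms(2) by (simp add: nth_append last_conv_nth)
  qed
qed

lemma trancl_dpath:
  assumes ac: "acyclic E" and "(a,b) \<in> E\<^sup>+"
  shows "\<exists>ps. is_dpath E ps \<and> hd ps = a \<and> last ps = b"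
  using assms(2)
proof (induction rule: trancl_induct)
  case (base y)
  then have "a \<noteq> y" using ac unfolding acyclic_def by blast
  then have "is_dpath E [a,y]" using base unfolding is_dpath_def
    by (auto simp: less_Suc_eq nth_Cons split: nat.splits)
  then show ?case by force
next
  case (step y z)
  then obtain ps where ps: "is_dpath E ps" "hd ps = a" "last ps = y" by blast
  have "z \<notin> set ps"
  proof
    assume "z \<in> set ps"
    then obtain i where i: "i < length ps" "ps!i = z" by (auto simp: in_set_conv_nth)
    have ne: "ps \<noteq> []" using ps unfolding is_dpath_def by simp
    have "(z, y) \<in> E\<^sup>*" using dpath_rtrancl[OF ps(1), of i "length ps - 1"] i ps(3) ne
      by (simp add: last_conv_nth)
    then have "(z,z) \<in> E\<^sup>+" using step(2) by simp
    then show False using ac unfolding acyclic_def by blast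
  qed
  then have "is_dpath E (ps @ [z])" using is_dpath_snoc ps step by metis
  moreover have "hd (ps @ [z]) = a" using ps unfolding is_dpath_def by simp
  ultimately show ?case by force
qed



definition trek :: "('v \<times> 'v) set \<Rightarrow> 'v list \<Rightarrow> nat \<Rightarrow> bool" where
"trek E W t \<longleftrightarrow> distinct W \<and> 2 \<le> length W \<and> 1 \<le> t \<and>
   (\<forall>i. Suc i < length W \<longrightarrow> (i < t \<longrightarrow> (W!Suc i, W!i) \<in> E) \<and> (t \<le> i \<longrightarrow> (W!i, W!Suc i) \<in> E))"

lemma trek_nocoll:
  assumes ac: "acyclic E" and tr: "trek E W t" and i: "0 < i" "Suc i < length W"
    and c1: "(W!(i-1), W!i) \<in> E" and c2: "(W!Suc i, W!i) \<in> E"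
  shows False
proof (cases "i < t")
  case True
  have h: "i - 1 < t" "Suc (i-1) = i" "Suc (i-1) < length W" using True i by auto
  have "(W!Suc (i-1), W!(i-1)) \<in> E" using tr h(1,3) unfolding trek_def by blast
  then show False using no2cycle[OF ac c1] i by simp
next
  case False
  then have "(W!i, W!Suc i) \<in> E" using tr i unfolding trek_def by simp
  then show False using no2cycle[OF ac c2] by simp
qed

lemma trek_down0: "trek E W t \<Longrightarrow> c \<le> t \<Longrightarrow> c < length W \<Longrightarrow> (W!c, W!0) \<in> E\<^sup>*"
proof (induction c)
  case 0 then show ?case by simp
next
  case (Suc c)
  then have "(W!Suc c, W!c) \<in> E" unfolding trek_def by auto
  then show ?case using Suc by (meson Suc_leD Suc_lessD converse_rtrancl_into_rtrancl)
qed

lemma trek_down: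
  assumes ac: "acyclic E" and tr: "trek E W t" and b: "Suc b < length W" and e: "(W!Suc b, W!b) \<in> E"
  shows "(W!b, W!0) \<in> E\<^sup>*"
proof -
  have "b < t"
  proof (rule ccontr)
    assume "\<not> b < t"
    then have "(W!b, W!Suc b) \<in> E" using tr b unfolding trek_def by simp
    then show False using no2cycle[OF ac e] by simp
  qed
  then show ?thesis using trek_down0[OF tr, of b] b by simp
qed

lemma trek_adj: "trek E W t \<Longrightarrow> Suc i < length W \<Longrightarrow> adjacent E (W!i) (W!Suc i)"
  unfolding trek_def adjacent_def by (metis not_less)



lemma combine:
  assumes ac: "acyclic E" and p: "is_dpath E p" and hp: "hd p = xk" and lp: "last p = xi"
    and ki: "xk \<noteq> xi" and kj: "xk \<noteq> xj"
    and tr: "trek E W t" and w0: "W!0 = xi" and lw: "last W = xj"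
  shows "\<exists>C. is_path E C \<and> hd C = xk \<and> last C = xj \<and> \<not> blocked E {xi} C"
proof -
  have pne: "p \<noteq> []" and pd: "distinct p" and pe: "\<And>i. Suc i < length p \<Longrightarrow> (p!i, p!Suc i) \<in> E"
    using p unfolding is_dpath_def by auto
  have Wd: "distinct W" and Wl: "2 \<le> length W" and t1: "1 \<le> t" using tr unfolding trek_def by auto
  have W10: "(W!1, W!0) \<in> E" using tr unfolding trek_def by (metis One_nat_def Suc_1 Suc_le_eq le_less_trans less_numeral_extra(1) t1 Wl)
  have xiW: "xi \<in> set W" using w0 Wl by (metis nth_mem order_less_le_trans pos2)
  have ex: "\<exists>a. a < length p \<and> p!a \<in> set W"
    using pne lp xiW by (intro exI[of _ "length p - 1"]) (auto simp: last_conv_nth)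
  define a where "a = (LEAST a. a < length p \<and> p!a \<in> set W)"
  have a: "a < length p" "p!a \<in> set W" using LeastI_ex[OF ex] unfolding a_def by auto
  have amin: "\<And>a'. a' < a \<Longrightarrow> p!a' \<notin> set W"
    using not_less_Least a unfolding a_def by (metis less_trans)
  obtain b where b: "b < length W" "W!b = p!a" using a(2) by (auto simp: in_set_conv_nth)
  define C where "C = take a p @ drop b W"
  have lenC: "length C = a + (length W - b)" using a b unfolding C_def by simp
  have Cnth: "\<And>i. i < length C \<Longrightarrow> C!i = (if i < a then p!i else W!(b+(i-a)))"
    using a b unfolding C_def by (auto simp: nth_append min_def)
  have Cle: "\<And>i. i \<le> a \<Longrightarrow> C!i = p!i"
    using Cnth lenC b by (metis add_0_right diff_self_eq_0 le_neq_implies_less less_add_same_cancel1 trans_less_add1 zero_less_diff)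
  have dis: "set (take a p) \<inter> set W = {}"
    using amin by (auto simp: in_set_conv_nth) (metis nth_mem)
  have isp: "is_path E C"
    unfolding is_path_def
  proof (intro conjI allI impI)
    show "C \<noteq> []" using lenC b by auto
    show "distinct C" unfolding C_def using dis pd Wd set_drop_subset[of b W] by auto
    fix i assume i: "Suc i < length C"
    show "adjacent E (C!i) (C!Suc i)"
    proof (cases "Suc i \<le> a")
      case True
      then show ?thesis using Cle[of i] Cle[of "Suc i"] pe[of i] a unfolding adjacent_def by simp
    next
      case False
      then have "a \<le> i" by simp
      then have "C!i = W!(b+(i-a))" "C!Suc i = W!Suc (b+(i-a))" "Suc (b+(i-a)) < length W"
        using Cnth[of i] Cnth[of "Suc i"] i lenC by (auto simp: Suc_diff_le)
      then show ?thesis using trek_adj[OF tr] by simp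
    qed
  qed
  have hC: "hd C = xk" using Cle[of 0] hp pne isp unfolding is_path_def by (simp add: hd_conv_nth)
  have lC: "last C = xj" using b lw unfolding C_def by simp
  have nb: "\<not> blocked E {xi} C"
  proof
    assume "blocked E {xi} C"
    then obtain i where i: "0 < i" "Suc i < length C"
      and cases: "(\<not> collider_at E C i \<and> C!i \<in> {xi}) \<or> (collider_at E C i \<and> {d. (C!i, d) \<in> E\<^sup>*} \<inter> {xi} = {})"
      unfolding blocked_def by blast
    consider "i < a" | "i = a" | "a < i" by linarith
    then show False
    proof cases
      case 1
      have e1: "(p!(i-1), p!i) \<in> E" using pe[of "i-1"] i 1 a by simp
      have e2: "(p!i, p!Suc i) \<in> E" using pe[of i] 1 a by simp
      have c: "C!(i-1) = p!(i-1)" "C!i = p!i" "C!Suc i = p!Suc i" using Cle 1 by auto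
      have "\<not> collider_at E C i" unfolding collider_at_def c using no2cycle[OF ac e2] by blast
      moreover have "C!i \<noteq> xi" using c amin[OF 1] xiW by auto
      ultimately show False using cases by blast
    next
      case 2
      have sb: "Suc b < length W" using i 2 lenC by simp
      have c: "C!(i-1) = p!(i-1)" "C!i = W!b" "C!Suc i = W!Suc b"
        using Cle[of "i-1"] Cle[of i] b 2 Cnth[of "Suc i"] i by auto
      have e1: "(p!(i-1), p!i) \<in> E" using pe[of "i-1"] i 2 a by simp
      show False
      proof (cases "b = 0")
        case True
        have "collider_at E C i" unfolding collider_at_def c using e1 2 b True W10 by simp
        moreover have "xi \<in> {d. (C!i, d) \<in> E\<^sup>*}" using c True w0 by simp
        ultimately show False using cases by blast
      next
        case False
        have "W!b \<noteq> W!0" using Wd False b(1) nth_eq_iff_index_eq[of W b 0] by (cases W) auto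
        then have "W!b \<noteq> xi" using w0 by simp
        moreover have "collider_at E C i \<Longrightarrow> xi \<in> {d. (C!i, d) \<in> E\<^sup>*}"
          unfolding collider_at_def c using trek_down[OF ac tr sb] w0 by simp
        ultimately show False using cases c by auto
      qed
    next
      case 3
      define j where "j = b + (i - a)"
      have j: "0 < j" "Suc j < length W" using 3 i lenC unfolding j_def by auto
      have c: "C!(i-1) = W!(j-1)" "C!i = W!j" "C!Suc i = W!Suc j"
        using Cnth[of "i-1"] Cnth[of i] Cnth[of "Suc i"] i 3 unfolding j_def by (auto simp: Suc_diff_le)
      have nc: "\<not> collider_at E C i" unfolding collider_at_def c using trek_nocoll[OF ac tr j] by blast
      have "W!j \<noteq> W!0" using Wd j nth_eq_iff_index_eq[of W j 0] by (cases W) auto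
      then have "W!j \<noteq> xi" using w0 by simp
      then show False using nc cases c by auto
    qed
  qed
  show ?thesis using isp hC lC nb by blast
qed



lemma ucp_trek:
  assumes q: "is_dpath E q" "2 \<le> length q" "hd q = xj" "last q = xi"
  shows "trek E (rev q) (length q - 1) \<and> rev q ! 0 = xi \<and> last (rev q) = xj"
proof -
  have qd: "distinct q" and qe: "\<And>i. Suc i < length q \<Longrightarrow> (q!i, q!Suc i) \<in> E"
    using q(1) unfolding is_dpath_def by auto
  have tr: "trek E (rev q) (length q - 1)"
    unfolding trek_def
  proof (intro conjI allI impI)
    show "distinct (rev q)" using qd by simp
    show "2 \<le> length (rev q)" using q(2) by simp
    show "1 \<le> length q - 1" using q(2) by simp
    fix i assume i: "Suc i < length (rev q)"
    have l: "Suc i < length q" using i by simp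
    have e1: "rev q ! i = q ! (length q - Suc i)" using l by (simp add: rev_nth)
    have e2: "rev q ! Suc i = q ! (length q - Suc (Suc i))" using l by (simp add: rev_nth)
    have e3: "length q - Suc i = Suc (length q - Suc (Suc i))" using l by simp
    show "(rev q ! Suc i, rev q ! i) \<in> E" if "i < length q - 1"
      unfolding e1 e2 e3 using qe[of "length q - Suc (Suc i)"] l by simp
    show "(rev q ! i, rev q ! Suc i) \<in> E" if "length q - 1 \<le> i"
      using that l by simp
  qed
  have qne: "q \<noteq> []" using q(2) by auto
  have "rev q ! 0 = xi" using q(4) qne by (metis hd_conv_nth hd_rev rev_is_Nil_conv)
  moreover have "last (rev q) = xj" using q(3) by (simp add: last_rev)
  ultimately show ?thesis using tr by blast
qed


lemma ubp_trek:
  assumes p: "is_dpath E p" "2 \<le> length p" and q: "is_dpath E q" "2 \<le> length q"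
    and h: "hd p = hd q" and s: "set p \<inter> set q = {hd p}" and lp: "last p = xi" and lq: "last q = xj"
  shows "trek E (rev p @ tl q) (length p - 1) \<and> (rev p @ tl q) ! 0 = xi \<and> last (rev p @ tl q) = xj"
proof -
  have pd: "distinct p" and pe: "\<And>i. Suc i < length p \<Longrightarrow> (p!i, p!Suc i) \<in> E"
    using p(1) unfolding is_dpath_def by auto
  have qd: "distinct q" and qe: "\<And>i. Suc i < length q \<Longrightarrow> (q!i, q!Suc i) \<in> E"
    using q(1) unfolding is_dpath_def by auto
  define W where "W = rev p @ tl q"
  have lW: "length W = length p + length q - 1" unfolding W_def using q by simp
  have Wn: "\<And>i. i < length W \<Longrightarrow> W!i = (if i < length p then p!(length p - Suc i) else q!(i - length p + 1))"
    unfolding W_def using q(2) by (auto simp: nth_append rev_nth nth_tl)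
  have pne: "p \<noteq> []" "q \<noteq> []" using p(2) q(2) by auto
  have hq: "hd q = q!0" "hd p = p!0" using pne by (auto simp: hd_conv_nth)
  have dW: "distinct W"
  proof -
    have "set p \<inter> set (tl q) = {}" using s h qd pne by (cases q) auto
    then show ?thesis unfolding W_def using pd qd by (simp add: distinct_tl)
  qed
  have "trek E W (length p - 1)"
    unfolding trek_def
  proof (intro conjI allI impI)
    show "distinct W" by (rule dW)
    show "2 \<le> length W" using lW p q by simp
    show "1 \<le> length p - 1" using p by simp
    fix i assume i: "Suc i < length W"
    show "(W ! Suc i, W ! i) \<in> E" if "i < length p - 1"
    proof -
      have "W!i = p!Suc (length p - Suc (Suc i))" "W!Suc i = p!(length p - Suc (Suc i))"
        using Wn[of i] Wn[of "Suc i"] i that by (auto simp: Suc_diff_Suc)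
      then show ?thesis using pe that by simp
    qed
    show "(W ! i, W ! Suc i) \<in> E" if "length p - 1 \<le> i"
    proof (cases "i = length p - 1")
      case True
      then have "W!i = q!0" "W!Suc i = q!1" using Wn[of i] Wn[of "Suc i"] i p(2) h hq by auto
      then show ?thesis using qe[of 0] q by simp
    next
      case False
      then have "W!i = q!(i - length p + 1)" "W!Suc i = q!Suc (i - length p + 1)"
        using Wn[of i] Wn[of "Suc i"] i that by (auto simp: Suc_diff_le)
      then show ?thesis using qe[of "i - length p + 1"] i lW False that by simp
    qed
  qed
  moreover have "W ! 0 = xi"
  proof -
    have "0 < length W" using lW p(2) by simp
    then have "W!0 = p!(length p - 1)" using Wn[of 0] pne by simp
    then show ?thesis using lp last_conv_nth[OF pne(1)] by simp
  qed
  moreover have "last W = xj"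
  proof -
    have tq: "tl q \<noteq> []" using q(2) by (cases q) auto
    then show ?thesis unfolding W_def using lq last_tl[of q] by simp
  qed
  ultimately show ?thesis by (simp only: W_def)
qed


theorem corollary1:
  fixes M :: "'a measure" and E :: "('v::finite \<times> 'v) set"
    and f :: "'v \<Rightarrow> 'v \<Rightarrow> real \<Rightarrow> real" and n Y :: "'v \<Rightarrow> 'a \<Rightarrow> real"
    and X :: "'v set" and GG :: "('v \<Rightarrow> real \<Rightarrow> real) set"
    and xi xj xk :: 'v
  assumes model: "SEM M E f n Y"
    and cfc: "CFC M E Y"
    and cls: "class_property M X n Y GG"
    and F3: "fact_F3 M E X Y GG"
    and mem: "xi \<in> X" "xj \<in> X" "xk \<in> X"
    and dist: "xi \<noteq> xj" "xi \<noteq> xk" "xj \<noteq> xk"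
    and inv: "\<forall>Ms Ns. \<forall>g1\<in>GG. \<forall>g2\<in>GG. Ms \<subseteq> X - {xi} \<and> Ns \<subseteq> X - {xj} \<longrightarrow>
               \<not> prob_space.indep_var M borel (resid Y xi g1 Ms) borel (resid Y xj g2 Ns)"
    and anc: "ancestor E xk xi"
    and ci: "cond_indep M Y {xk} {xj} {xi}"
  shows "ancestor E xi xj"
  proof -
  have ac: "acyclic E" using model unfolding SEM_def by blast
  have "invisible E X xi xj \<longleftrightarrow> (\<forall>Ms Ns. \<forall>g1\<in>GG. \<forall>g2\<in>GG. Ms \<subseteq> X - {xi} \<and> Ns \<subseteq> X - {xj} \<longrightarrow>
             \<not> prob_space.indep_var M borel (resid Y xi g1 Ms) borel (resid Y xj g2 Ns))"
    using F3 mem dist unfolding fact_F3_def by blast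
  then have invis: "invisible E X xi xj" using inv by blast
  have dsep: "d_separated E {xk} {xj} {xi}" using cfc ci dist unfolding CFC_def by auto
  obtain p where p: "is_dpath E p" "hd p = xk" "last p = xi"
    using trancl_dpath[OF ac] anc unfolding ancestor_def by blast
  have noW: False if tr: "trek E W t" and w0: "W!0 = xi" and lw: "last W = xj" for W t
  proof -
    obtain C where C: "is_path E C" "hd C = xk" "last C = xj" "\<not> blocked E {xi} C"
      using combine[OF ac p dist(2)[symmetric] dist(3)[symmetric] tr w0 lw] by blast
    then show False using dsep unfolding d_separated_def by auto
  qed
  show ?thesis
  proof (cases "UCP E X xi xj")
    case True
    then obtain ps where ps: "is_dpath E ps" "length ps \<ge> 2" "hd ps = xi" "last ps = xj"
      unfolding UCP_def by blast
    have ne: "ps \<noteq> []" using ps(2) by auto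
    have "(ps!0, ps!(length ps - 1)) \<in> E\<^sup>+" using dpath_trancl[OF ps(1)] ps(2) by simp
    then show ?thesis using ps ne unfolding ancestor_def by (simp add: hd_conv_nth last_conv_nth)
  next
    case False
    then have "UBP E X xi xj \<or> UCP E X xj xi" using invis unfolding invisible_def by blast
    then show ?thesis
    proof
      assume "UBP E X xi xj"
      then obtain p q where pq: "is_dpath E p" "is_dpath E q" "length p \<ge> 2" "length q \<ge> 2"
        "hd p = hd q" "last p = xi" "last q = xj" "set p \<inter> set q = {hd p}"
        unfolding UBP_def by blast
      show ?thesis using ubp_trek[OF pq(1,3,2,4,5,8,6,7)] noW by blast
    next
      assume "UCP E X xj xi"
      then obtain q where q: "is_dpath E q" "length q \<ge> 2" "hd q = xj" "last q = xi"
        unfolding UCP_def by blast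
      show ?thesis using ucp_trek[OF q] noW by blast
    qed
  qed
qed

end
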